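(* Let $\eta>0$ and $\beta\in\mathbb{R}$. Let $\widehat{\mathcal{L}}_1,\widehat{\mathcal{L}}_2\in\mathbb{R}^{N\times N}$ satisfy $\langle \widehat{\mathcal{L}}_i\mathbf{x},\mathbf{x}\rangle\le 0$ for all $\mathbf{x}\in\mathbb{R}^N$ and $i=1,2$, and additionally $\langle \widehat{\mathcal{L}}_1\mathbf{w},\widehat{\mathcal{L}}_2\mathbf{w}\rangle\ge 0$ for all $\mathbf{w}\in\mathbb{R}^N$. Set $\gamma_*:=\frac{\eta^2+\beta^2}{\eta}$ and $$\mathcal{P}_{\gamma_*}:=\left[\eta I-\widehat{\mathcal{L}}_2+\beta^2(\eta I-\widehat{\mathcal{L}}_1)^{-1}\right](\gamma_* I-\widehat{\mathcal{L}}_2)^{-1}.$$ Then $\mathcal{P}_{\gamma_*}$ is invertible and its two-norm condition number satisfies $$\kappa(\mathcal{P}_{\gamma_*})=\|\mathcal{P}_{\gamma_*}\|\,\|\mathcal{P}_{\gamma_*}^{-1}\|\le 2+\frac{\beta^2}{\eta^2}.$$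
   Context: $\langle\cdot,\cdot\rangle$ and $\|\cdot\|$ denote the Euclidean inner product and the induced vector norm / operator two-norm on $\mathbb{R}^N$. The hypothesis $\langle \widehat{\mathcal{L}}_i\mathbf{x},\mathbf{x}\rangle\le 0$ for all $\mathbf{x}$ (field of values in the closed left half plane) guarantees that $\eta I-\widehat{\mathcal{L}}_1$ and $\gamma I-\widehat{\mathcal{L}}_2$ are invertible for $\eta,\gamma>0$. The operator $\mathcal{P}_{\gamma_*}$ is the Schur complement $\eta I-\widehat{\mathcal{L}}_2+\beta^2(\eta I-\widehat{\mathcal{L}}_1)^{-1}$ of the block matrix $\begin{bmatrix}\eta I-\widehat{\mathcal{L}}_1 & \phi I\\ -\frac{\beta^2}{\phi}I & \eta I-\widehat{\mathcal{L}}_2\end{bmatrix}$ ($\phi\neq0$), right-preconditioned by $(\gamma_* I-\widehat{\mathcal{L}}_2)^{-1}$. *)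

theory Defs
  imports "HOL-Analysis.Analysis"
begin

definition opnorm2 :: "real^'n^'n \<Rightarrow> real" where
  "opnorm2 A = onorm (\<lambda>x. A *v x)"

definition cond2 :: "real^'n^'n \<Rightarrow> real" where
  "cond2 A = opnorm2 A * opnorm2 (matrix_inv A)"

end

theory Submission
  imports Defs
begin

lemma smI_apply:
  fixes L :: "real^'n^'n"
  shows "(s *\<^sub>R mat 1 - L) *v x = s *\<^sub>R x - L *v x"
  by (simp add: matrix_vector_mult_diff_rdistrib scaleR_matrix_vector_assoc[symmetric])

lemma lb_sq:
  fixes L :: "real^'n^'n"
  shows "(norm (s *\<^sub>R x - L *v x))^2 = s^2 * (norm x)^2 - 2 * s * ((L *v x) \<bullet> x) + (norm (L *v x))^2"
  unfolding power2_norm_eq_inner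
  by (simp add: inner_diff_left inner_diff_right inner_commute[of x "L *v x"] power2_eq_square right_diff_distrib)

lemma lb1:
  fixes L :: "real^'n^'n"
  assumes neg: "\<And>x. (L *v x) \<bullet> x \<le> 0" and s: "s \<ge> 0"
  shows "s * norm x \<le> norm (s *\<^sub>R x - L *v x)"
proof -
  have h: "2 * s * ((L *v x) \<bullet> x) \<le> 0" using neg[of x] s by (simp add: mult_nonneg_nonpos)
  have h2: "0 \<le> (norm (L *v x))^2" by simp
  have "(s * norm x)^2 \<le> (norm (s *\<^sub>R x - L *v x))^2"
    unfolding lb_sq[of s x L] power_mult_distrib using h h2 by linarith
  then show ?thesis by (rule power2_le_imp_le) simp
qed

lemma lb2:
  fixes L :: "real^'n^'n"
  assumes neg: "\<And>x. (L *v x) \<bullet> x \<le> 0" and s: "s \<ge> 0"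
  shows "norm (L *v x) \<le> norm (s *\<^sub>R x - L *v x)"
proof -
  have h: "2 * s * ((L *v x) \<bullet> x) \<le> 0" using neg[of x] s by (simp add: mult_nonneg_nonpos)
  have h2: "0 \<le> s^2 * (norm x)^2" by simp
  have "(norm (L *v x))^2 \<le> (norm (s *\<^sub>R x - L *v x))^2"
    unfolding lb_sq[of s x L] using h h2 by linarith
  then show ?thesis by (rule power2_le_imp_le) simp
qed

lemma inv_of_lb:
  fixes A :: "real^'n^'n"
  assumes c: "c > 0" and lb: "\<And>x. c * norm x \<le> norm (A *v x)"
  shows "invertible A"
proof -
  have "inj ((*v) A)"
  proof (rule injI)
    fix x y assume "A *v x = A *v y"
    then have "A *v (x - y) = 0" by (simp add: matrix_vector_mult_diff_distrib)
    then have "c * norm (x - y) \<le> 0" using lb[of "x - y"] by simp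
    then show "x = y" using c by (simp add: mult_le_0_iff)
  qed
  then show ?thesis
    using invertible_left_inverse matrix_left_invertible_injective by blast
qed

lemma inv_props:
  fixes A :: "real^'n^'n"
  assumes "invertible A"
  shows "A ** matrix_inv A = mat 1" "matrix_inv A ** A = mat 1"
proof -
  have "\<exists>A'. A ** A' = mat 1 \<and> A' ** A = mat 1" using assms unfolding invertible_def by blast
  then have "A ** matrix_inv A = mat 1 \<and> matrix_inv A ** A = mat 1"
    unfolding matrix_inv_def by (rule someI_ex)
  then show "A ** matrix_inv A = mat 1" "matrix_inv A ** A = mat 1" by auto
qed

lemma inv_apply:
  fixes A :: "real^'n^'n"
  assumes "invertible A"
  shows "A *v (matrix_inv A *v x) = x" "matrix_inv A *v (A *v x) = x"
  using inv_props[OF assms] by (simp_all add: matrix_vector_mul_assoc)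

lemma norm_diff_sq:
  fixes a b :: "real^'n"
  shows "(norm (a - t *\<^sub>R b))^2 = (norm a)^2 - 2 * t * (a \<bullet> b) + t^2 * (norm b)^2"
  unfolding power2_norm_eq_inner
  by (simp add: inner_diff_left inner_diff_right inner_commute[of b a] power2_eq_square algebra_simps)

theorem theorem3:
  fixes L1 L2 :: "real^'n^'n" and \<eta> \<beta> :: real
  assumes eta_pos: "\<eta> > 0"
    and neg1: "\<And>x. (L1 *v x) \<bullet> x \<le> 0"
    and neg2: "\<And>x. (L2 *v x) \<bullet> x \<le> 0"
    and cross: "\<And>w. (L1 *v w) \<bullet> (L2 *v w) \<ge> 0"
  defines "\<gamma> \<equiv> (\<eta>\<^sup>2 + \<beta>\<^sup>2) / \<eta>"
  defines "P \<equiv> (\<eta> *\<^sub>R mat 1 - L2 + \<beta>\<^sup>2 *\<^sub>R matrix_inv (\<eta> *\<^sub>R mat 1 - L1))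
                  ** matrix_inv (\<gamma> *\<^sub>R mat 1 - L2)"
  shows "invertible P \<and> cond2 P \<le> 2 + \<beta>\<^sup>2 / \<eta>\<^sup>2"
proof -
  define A where "A = \<eta> *\<^sub>R mat 1 - L1"
  define B where "B = \<eta> *\<^sub>R mat 1 - L2"
  define C where "C = \<gamma> *\<^sub>R mat 1 - L2"
  define t where "t = \<beta>\<^sup>2 / \<eta>"
  define M where "M = B ** A + \<beta>\<^sup>2 *\<^sub>R mat 1"
  have t0: "t \<ge> 0" unfolding t_def using eta_pos by simp
  have gt: "\<gamma> = \<eta> + t" unfolding \<gamma>_def t_def using eta_pos by (simp add: field_simps power2_eq_square)
  have teta: "t * \<eta> = \<beta>\<^sup>2" unfolding t_def using eta_pos by simp
  have gpos: "\<gamma> > 0" using gt t0 eta_pos by simp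
  have Av: "\<And>x. A *v x = \<eta> *\<^sub>R x - L1 *v x" unfolding A_def by (rule smI_apply)
  have Bv: "\<And>x. B *v x = \<eta> *\<^sub>R x - L2 *v x" unfolding B_def by (rule smI_apply)
  have Cv: "\<And>x. C *v x = \<gamma> *\<^sub>R x - L2 *v x" unfolding C_def by (rule smI_apply)
  have Alb: "\<And>x. \<eta> * norm x \<le> norm (A *v x)" using lb1[OF neg1] eta_pos Av by simp
  have Alb2: "\<And>x. norm (L1 *v x) \<le> norm (A *v x)" using lb2[OF neg1] eta_pos Av by simp
  have Clb: "\<And>x. \<gamma> * norm x \<le> norm (C *v x)" using lb1[OF neg2] gpos Cv by simp
  have Ainv: "invertible A" by (rule inv_of_lb[OF eta_pos Alb])
  have Cinv: "invertible C" by (rule inv_of_lb[OF gpos Clb])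
  define Ai where "Ai = matrix_inv A"
  define Ci where "Ci = matrix_inv C"
  have Aiinv: "invertible Ai" using inv_props[OF Ainv] unfolding Ai_def invertible_def by blast
  have Ciinv: "invertible Ci" using inv_props[OF Cinv] unfolding Ci_def invertible_def by blast
  have Mv: "\<And>w. M *v w = B *v (A *v w) + \<beta>\<^sup>2 *\<^sub>R w"
    unfolding M_def by (simp add: matrix_vector_mult_add_rdistrib matrix_vector_mul_assoc
        scaleR_matrix_vector_assoc[symmetric])
  have Peq: "P = M ** Ai ** Ci"
  proof -
    have "B + \<beta>\<^sup>2 *\<^sub>R Ai = M ** Ai"
      unfolding matrix_eq
    proof
      fix x
      show "(B + \<beta>\<^sup>2 *\<^sub>R Ai) *v x = (M ** Ai) *v x"
        using inv_apply(1)[OF Ainv, of x]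
        by (simp add: Mv matrix_vector_mul_assoc[symmetric] matrix_vector_mult_add_rdistrib
            scaleR_matrix_vector_assoc[symmetric] Ai_def)
    qed
    then show ?thesis unfolding P_def A_def B_def C_def Ai_def Ci_def by simp
  qed
  have PCA: "\<And>w. P *v (C *v (A *v w)) = M *v w"
    unfolding Peq using inv_apply(2)[OF Ainv] inv_apply(2)[OF Cinv]
    by (simp add: matrix_vector_mul_assoc[symmetric] Ai_def Ci_def)
  have CAw: "\<And>w. C *v (A *v w) = M *v w - t *\<^sub>R (L1 *v w)"
  proof -
    fix w
    have "C *v (A *v w) = B *v (A *v w) + t *\<^sub>R (A *v w)"
      unfolding Cv Bv gt by (simp add: algebra_simps)
    also have "\<dots> = M *v w - t *\<^sub>R (L1 *v w)"
      unfolding Av Mv teta[symmetric] by (simp add: algebra_simps)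
    finally show "C *v (A *v w) = M *v w - t *\<^sub>R (L1 *v w)" .
  qed
  have inner_neg: "\<And>w. (M *v w) \<bullet> (L1 *v w) \<le> 0"
  proof -
    fix w
    define v where "v = L1 *v w"
    have L2u: "L2 *v (A *v w) = \<eta> *\<^sub>R (L2 *v w) - L2 *v v"
      unfolding v_def Av by (simp add: matrix_vector_mult_diff_distrib matrix_scaleR_vector_ac
          scaleR_matrix_vector_assoc)
    have eqM: "M *v w = \<eta> *\<^sub>R (\<eta> *\<^sub>R w - v) - (\<eta> *\<^sub>R (L2 *v w) - L2 *v v) + \<beta>\<^sup>2 *\<^sub>R w"
      using Mv Bv L2u Av v_def by simp
    then have "(M *v w) \<bullet> v = \<eta>*\<eta> * (w \<bullet> v) - \<eta> * (v \<bullet> v) - \<eta> * ((L2 *v w) \<bullet> v)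
        + (L2 *v v) \<bullet> v + \<beta>\<^sup>2 * (w \<bullet> v)"
      unfolding eqM by (simp add: inner_diff_left inner_add_left algebra_simps)
    moreover have wv: "w \<bullet> v \<le> 0" using neg1[of w] v_def by (simp add: inner_commute)
    moreover have "(L2 *v w) \<bullet> v \<ge> 0" using cross[of w] v_def by (simp add: inner_commute)
    moreover have "(L2 *v v) \<bullet> v \<le> 0" by (rule neg2)
    moreover have "\<eta> * (v \<bullet> v) \<ge> 0" using eta_pos by simp
    moreover have "\<eta> * ((L2 *v w) \<bullet> v) \<ge> 0" using eta_pos cross[of w] v_def by (simp add: inner_commute)
    moreover have "\<eta>*\<eta> * (w \<bullet> v) \<le> 0" using wv by (simp add: mult_nonneg_nonpos)
    moreover have "\<beta>\<^sup>2 * (w \<bullet> v) \<le> 0" using wv by (simp add: mult_nonneg_nonpos)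
    ultimately have "(M *v w) \<bullet> v \<le> 0" by linarith
    then show "(M *v w) \<bullet> (L1 *v w) \<le> 0" unfolding v_def .
  qed
  have Mle: "\<And>w. norm (M *v w) \<le> norm (C *v (A *v w))"
  proof -
    fix w
    have nd: "(norm (M *v w - t *\<^sub>R (L1 *v w)))^2 = (norm (M *v w))^2
        - 2 * t * ((M *v w) \<bullet> (L1 *v w)) + t^2 * (norm (L1 *v w))^2"
      by (rule norm_diff_sq)
    have "(norm (M *v w))^2 \<le> (norm (C *v (A *v w)))^2"
    proof -
      have "2 * t * ((M *v w) \<bullet> (L1 *v w)) \<le> 0" using inner_neg[of w] t0 by (simp add: mult_nonneg_nonpos)
      moreover have "0 \<le> t^2 * (norm (L1 *v w))^2" by simp
      ultimately show ?thesis unfolding CAw[of w] nd by linarith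
    qed
    then show "norm (M *v w) \<le> norm (C *v (A *v w))" by (rule power2_le_imp_le) simp
  qed
  have CAle: "\<And>w. \<eta> * norm (C *v (A *v w)) \<le> \<gamma> * norm (M *v w)"
  proof -
    fix w
    have a: "norm (C *v (A *v w)) \<le> norm (M *v w) + t * norm (L1 *v w)"
      using CAw[of w] norm_triangle_ineq4[of "M *v w" "t *\<^sub>R (L1 *v w)"] t0 by simp
    have "\<gamma> * norm (L1 *v w) \<le> \<gamma> * norm (A *v w)"
      using Alb2[of w] gpos by (simp add: mult_left_mono)
    then have b: "\<gamma> * norm (L1 *v w) \<le> norm (C *v (A *v w))"
      using Clb[of "A *v w"] by linarith
    have b': "t * (\<gamma> * norm (L1 *v w)) \<le> t * norm (C *v (A *v w))"
      using b t0 by (simp add: mult_left_mono)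
    have a': "\<gamma> * norm (C *v (A *v w)) \<le> \<gamma> * norm (M *v w) + \<gamma> * (t * norm (L1 *v w))"
      using mult_left_mono[OF a, of \<gamma>] gpos by (simp add: distrib_left)
    have e1: "\<gamma> * (t * norm (L1 *v w)) = t * (\<gamma> * norm (L1 *v w))" by simp
    have e2: "\<gamma> * norm (C *v (A *v w)) = \<eta> * norm (C *v (A *v w)) + t * norm (C *v (A *v w))"
      using gt by (simp add: distrib_right)
    show "\<eta> * norm (C *v (A *v w)) \<le> \<gamma> * norm (M *v w)" using a' b' e1 e2 by linarith
  qed
  have Mlb: "\<And>w. \<eta>\<^sup>2 * norm w \<le> norm (M *v w)"
  proof -
    fix w
    have "\<gamma> * (\<eta> * norm w) \<le> \<gamma> * norm (A *v w)" using Alb[of w] gpos by simp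
    also have "\<dots> \<le> norm (C *v (A *v w))" by (rule Clb)
    finally have "\<eta> * (\<gamma> * (\<eta> * norm w)) \<le> \<eta> * norm (C *v (A *v w))"
      using eta_pos by (simp add: mult_left_mono)
    then have "\<eta> * (\<gamma> * (\<eta> * norm w)) \<le> \<gamma> * norm (M *v w)"
      using CAle[of w] by linarith
    then have "\<gamma> * (\<eta>\<^sup>2 * norm w) \<le> \<gamma> * norm (M *v w)" by (simp add: power2_eq_square algebra_simps)
    then show "\<eta>\<^sup>2 * norm w \<le> norm (M *v w)" using gpos by simp
  qed
  have Minv: "invertible M" by (rule inv_of_lb[OF _ Mlb]) (use eta_pos in simp)
  have Pinv: "invertible P" unfolding Peq by (intro invertible_mult Minv Aiinv Ciinv)
  have CAx: "\<And>x. C *v (A *v (Ai *v (Ci *v x))) = x"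
    using inv_apply(1)[OF Ainv] inv_apply(1)[OF Cinv] by (simp add: Ai_def Ci_def)
  have n1: "opnorm2 P \<le> 1"
    unfolding opnorm2_def
  proof (rule onorm_le)
    fix x
    show "norm (P *v x) \<le> 1 * norm x"
      using Mle[of "Ai *v (Ci *v x)"] PCA[of "Ai *v (Ci *v x)"] CAx[of x] by simp
  qed
  define Pi where "Pi = matrix_inv P"
  have n2: "opnorm2 Pi \<le> \<gamma> / \<eta>"
    unfolding opnorm2_def
  proof (rule onorm_le)
    fix x
    define z where "z = Pi *v x"
    define w where "w = Ai *v (Ci *v z)"
    have zx: "P *v z = x" unfolding z_def Pi_def by (rule inv_apply(1)[OF Pinv])
    have zw: "C *v (A *v w) = z" unfolding w_def by (rule CAx)
    have "x = M *v w" using zx zw PCA[of w] by simp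
    then have "\<eta> * norm z \<le> \<gamma> * norm x" using CAle[of w] zw by simp
    then show "norm (Pi *v x) \<le> \<gamma> / \<eta> * norm x"
      unfolding z_def[symmetric] using eta_pos by (simp add: field_simps)
  qed
  have p1: "opnorm2 P \<ge> 0" unfolding opnorm2_def
    by (rule onorm_pos_le) (rule matrix_vector_mul_bounded_linear)
  have p2: "opnorm2 Pi \<ge> 0" unfolding opnorm2_def
    by (rule onorm_pos_le) (rule matrix_vector_mul_bounded_linear)
  have "cond2 P \<le> 1 * (\<gamma> / \<eta>)"
    unfolding cond2_def Pi_def[symmetric] using n1 n2 p1 p2 by (intro mult_mono) auto
  also have "\<dots> = 1 + \<beta>\<^sup>2 / \<eta>\<^sup>2" unfolding \<gamma>_def using eta_pos
    by (simp add: field_simps power2_eq_square)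
  also have "\<dots> \<le> 2 + \<beta>\<^sup>2 / \<eta>\<^sup>2" by simp
  finally show ?thesis using Pinv by simp
qed

end
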